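(* Let $d\in\mathbb{N}$, let $A$ be a $d\times d$ reclusive matrix, $\mathcal{P}_{A}$ its reclusive partition, and $\Delta_{A}$ its reclusive distance. Then for every $\vec{p}\in\mathbb{R}^{d}$, $|\mathcal{N}_{\Delta_{A}/2}(\vec{p})|\leq d+1$.
   Context: A $d\times d$ matrix $A=(a_{ij})$ is reclusive if $a_{ij}=0$ for $i>j$, $a_{ii}=1$ for all $i$, and $a_{ij}>a_{ik}>0$ for all $i\le j<k$. Its lattice is $L_A=\{A\vec{v}:\vec{v}\in\mathbb{Z}^d\}$ and its reclusive partition is $\mathcal{P}_A=\{\vec{a}+[0,1)^d:\vec{a}\in L_A\}$ (a partition of $\mathbb{R}^d$). Its reclusive distance is $\Delta_A=\min\{\delta_1,\delta_2,\delta_3,\delta_4\}$ where $\delta_1=1$, $\delta_2=\min_{k\in[d]}\min_{k<j\le d}(1-a_{kj})$, $\delta_3=\min_{k\in[d]}\min_{k<j\le d}a_{kj}$, $\delta_4=\min_{k\in[d]}\min_{k<j<j'\le d}(a_{kj}-a_{kj'})$, with $\min\emptyset=\infty$. On $\mathbb{R}^d$ use $d_{max}(\vec{x},\vec{y})=\max_i|x_i-y_i|$, $\overline{B}_{\epsilon}(\vec{p})=\{\vec{x}:d_{max}(\vec{x},\vec{p})\le\epsilon\}$ and $\mathcal{N}_{\epsilon}(\vec{p})=\{X\in\mathcal{P}_A: X\cap\overline{B}_{\epsilon}(\vec{p})\neq\emptyset\}$. *)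

theory Defs
  imports Complex_Main
begin

text \<open>Convention: indices are 0-based, i.e. [d] is rendered as {0..<d}.
  A point of R^d is a function nat => real vanishing outside {0..<d};
  a d x d matrix is a function nat => nat => real (only entries with
  indices < d matter).\<close>

definition Rd :: "nat \<Rightarrow> (nat \<Rightarrow> real) set" where
  "Rd d = {x. \<forall>i\<ge>d. x i = 0}"

definition reclusive :: "nat \<Rightarrow> (nat \<Rightarrow> nat \<Rightarrow> real) \<Rightarrow> bool" where
  "reclusive d A \<longleftrightarrow>
     (\<forall>i<d. \<forall>j<d. j < i \<longrightarrow> A i j = 0) \<and>
     (\<forall>i<d. A i i = 1) \<and>
     (\<forall>i j k. i \<le> j \<and> j < k \<and> k < d \<longrightarrow> A i j > A i k \<and> A i k > 0)"

definition mat_vec :: "nat \<Rightarrow> (nat \<Rightarrow> nat \<Rightarrow> real) \<Rightarrow> (nat \<Rightarrow> int) \<Rightarrow> (nat \<Rightarrow> real)" where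
  "mat_vec d A v = (\<lambda>i. if i < d then (\<Sum>j<d. A i j * real_of_int (v j)) else 0)"

definition lattice :: "nat \<Rightarrow> (nat \<Rightarrow> nat \<Rightarrow> real) \<Rightarrow> (nat \<Rightarrow> real) set" where
  "lattice d A = {mat_vec d A v | v. True}"

definition unit_cell :: "nat \<Rightarrow> (nat \<Rightarrow> real) \<Rightarrow> (nat \<Rightarrow> real) set" where
  "unit_cell d a = {x \<in> Rd d. \<forall>i<d. a i \<le> x i \<and> x i < a i + 1}"

definition reclusive_partition :: "nat \<Rightarrow> (nat \<Rightarrow> nat \<Rightarrow> real) \<Rightarrow> (nat \<Rightarrow> real) set set" where
  "reclusive_partition d A = unit_cell d ` lattice d A"

definition reclusive_distance :: "nat \<Rightarrow> (nat \<Rightarrow> nat \<Rightarrow> real) \<Rightarrow> real" where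
  "reclusive_distance d A = Min ({1}
      \<union> {1 - A k j | k j. k < j \<and> j < d}
      \<union> {A k j | k j. k < j \<and> j < d}
      \<union> {A k j - A k j' | k j j'. k < j \<and> j < j' \<and> j' < d})"

definition max_cball :: "nat \<Rightarrow> (nat \<Rightarrow> real) \<Rightarrow> real \<Rightarrow> (nat \<Rightarrow> real) set" where
  "max_cball d p e = {x \<in> Rd d. \<forall>i<d. \<bar>x i - p i\<bar> \<le> e}"

definition neighbourhood :: "nat \<Rightarrow> (nat \<Rightarrow> nat \<Rightarrow> real) \<Rightarrow> real \<Rightarrow> (nat \<Rightarrow> real) \<Rightarrow> (nat \<Rightarrow> real) set set" where
  "neighbourhood d A e p = {X \<in> reclusive_partition d A. X \<inter> max_cball d p e \<noteq> {}}"

end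

theory Submission imports Defs begin

lemma fin2: "finite {f k j | k j. k < j \<and> j < (d::nat)}"
proof -
  have "{f k j | k j. k < j \<and> j < d} \<subseteq> (\<lambda>(k,j). f k j) ` ({..<d} \<times> {..<d})" by force
  then show ?thesis by (rule finite_subset) auto
qed

lemma fin3: "finite {f k j j' | k j j'. k < j \<and> j < j' \<and> j' < (d::nat)}"
proof -
  have "{f k j j' | k j j'. k < j \<and> j < j' \<and> j' < d} \<subseteq> (\<lambda>(k,j,j'). f k j j') ` ({..<d} \<times> {..<d} \<times> {..<d})"
  proof
    fix z assume "z \<in> {f k j j' | k j j'. k < j \<and> j < j' \<and> j' < d}"
    then obtain k j j' where "z = f k j j'" "k < j" "j < j'" "j' < d" by blast
    then show "z \<in> (\<lambda>(k,j,j'). f k j j') ` ({..<d} \<times> {..<d} \<times> {..<d})"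
      by (intro image_eqI[where x="(k,j,j')"]) auto
  qed
  then show ?thesis by (rule finite_subset) auto
qed

lemma rec_facts:
  assumes "reclusive d A"
  shows "\<And>a b. a < d \<Longrightarrow> b < a \<Longrightarrow> A a b = 0"
    and "\<And>a. a < d \<Longrightarrow> A a a = 1"
    and "\<And>a b c. a \<le> b \<Longrightarrow> b < c \<Longrightarrow> c < d \<Longrightarrow> A a c < A a b \<and> 0 < A a c"
  using assms unfolding reclusive_def by auto

lemma dist_props:
  assumes R: "reclusive d A"
  shows "reclusive_distance d A \<le> 1"
   "\<And>k j. k < j \<Longrightarrow> j < d \<Longrightarrow> reclusive_distance d A \<le> 1 - A k j"
   "\<And>k j. k < j \<Longrightarrow> j < d \<Longrightarrow> reclusive_distance d A \<le> A k j"
   "\<And>k j j'. k < j \<Longrightarrow> j < j' \<Longrightarrow> j' < d \<Longrightarrow> reclusive_distance d A \<le> A k j - A k j'"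
   "0 < reclusive_distance d A"
proof -
  let ?S = "{1}
      \<union> {1 - A k j | k j. k < j \<and> j < d}
      \<union> {A k j | k j. k < j \<and> j < d}
      \<union> {A k j - A k j' | k j j'. k < j \<and> j < j' \<and> j' < d}"
  have fin: "finite ?S" using fin2[of "\<lambda>k j. 1 - A k j" d] fin2[of "\<lambda>k j. A k j" d]
      fin3[of "\<lambda>k j j'. A k j - A k j'" d] by simp
  have D: "reclusive_distance d A = Min ?S" unfolding reclusive_distance_def by simp
  show "reclusive_distance d A \<le> 1" unfolding D by (rule Min_le[OF fin]) simp
  show "\<And>k j. k < j \<Longrightarrow> j < d \<Longrightarrow> reclusive_distance d A \<le> 1 - A k j"
    unfolding D by (rule Min_le[OF fin]) blast
  show "\<And>k j. k < j \<Longrightarrow> j < d \<Longrightarrow> reclusive_distance d A \<le> A k j"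
    unfolding D by (rule Min_le[OF fin]) blast
  show "\<And>k j j'. k < j \<Longrightarrow> j < j' \<Longrightarrow> j' < d \<Longrightarrow> reclusive_distance d A \<le> A k j - A k j'"
    unfolding D by (rule Min_le[OF fin]) blast
  note rf = rec_facts[OF R]
  have "\<forall>a\<in>?S. 0 < a"
  proof
    fix a assume "a \<in> ?S"
    then consider "a = 1" | k j where "a = 1 - A k j" "k < j" "j < d"
      | k j where "a = A k j" "k < j" "j < d"
      | k j j' where "a = A k j - A k j'" "k < j" "j < j'" "j' < d" by blast
    then show "0 < a"
    proof cases
      case 2 then show ?thesis using rf(3)[of k k j] rf(2)[of k] by auto
    next
      case 3 then show ?thesis using rf(3)[of k k j] by auto
    next
      case 4 then show ?thesis using rf(3)[of k j j'] by auto
    qed simp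
  qed
  then show "0 < reclusive_distance d A" unfolding D using Min_gr_iff[OF fin] by blast
qed

lemma row_split:
  assumes R: "reclusive d A" and j: "j < d"
  shows "(\<Sum>l<d. A j l * w l) = w j + (\<Sum>l\<in>{Suc j..<d}. A j l * w l)"
proof -
  note rf = rec_facts[OF R]
  have U: "{..<d} = {..<j} \<union> {j..<d}" using j by auto
  have "(\<Sum>l<d. A j l * w l) = (\<Sum>l<j. A j l * w l) + (\<Sum>l\<in>{j..<d}. A j l * w l)"
    by (subst U, rule sum.union_disjoint) auto
  also have "(\<Sum>l<j. A j l * w l) = 0" using rf(1)[OF j] by simp
  also have "(\<Sum>l\<in>{j..<d}. A j l * w l) = A j j * w j + (\<Sum>l\<in>{Suc j..<d}. A j l * w l)"
    using j by (simp add: sum.atLeast_Suc_lessThan)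
  finally show ?thesis using rf(2)[OF j] by simp
qed

lemma int_pos_case:
  fixes k :: int and t D :: real
  assumes "\<bar>of_int k + t\<bar> < 1 + D" "D \<le> t" "t \<le> 1 - D"
  shows "k = -1 \<or> k = 0"
proof -
  have "of_int k < (1::real)" using assms by (simp add: abs_less_iff) 
  then have "k < 1" by simp
  moreover have "of_int k > (-2::real)" using assms by (simp add: abs_less_iff)
  then have "k > -2" by simp
  ultimately show ?thesis by arith
qed

lemma int_neg_case:
  fixes k :: int and t D :: real
  assumes "\<bar>of_int k + t\<bar> < 1 + D" "-(1 - D) \<le> t" "t \<le> - D"
  shows "k = 1 \<or> k = 0"
proof -
  have "of_int k < (2::real)" using assms by (simp add: abs_less_iff) 
  then have "k < 2" by simp
  moreover have "of_int k > (-1::real)" using assms by (simp add: abs_less_iff)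
  then have "k > -1" by simp
  ultimately show ?thesis by arith
qed

lemma key:
  fixes u :: "nat \<Rightarrow> int"
  assumes R: "reclusive d A" and id: "i < d"
    and nz: "\<exists>j. i < j \<and> j < d \<and> u j \<noteq> 0"
    and rows: "\<And>j. i < j \<Longrightarrow> j < d \<Longrightarrow> \<bar>\<Sum>l<d. A j l * of_int (u l)\<bar> < 1 + reclusive_distance d A"
  shows "reclusive_distance d A \<le> \<bar>\<Sum>l<d. A i l * of_int (u l)\<bar>"
proof -
  define D where "D = reclusive_distance d A"
  define T where "T \<rho> m = (\<Sum>l\<in>{m..<d}. A \<rho> l * of_int (u l))" for \<rho> m
  note props = dist_props[OF R, folded D_def]
  note rf = rec_facts[OF R]
  have rowT: "\<And>j. j < d \<Longrightarrow> (\<Sum>l<d. A j l * of_int (u l)) = of_int (u j) + T j (Suc j)"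
    unfolding T_def by (rule row_split[OF R])
  have Tstep: "\<And>\<rho> n. n < d \<Longrightarrow> T \<rho> n = A \<rho> n * of_int (u n) + T \<rho> (Suc n)"
    unfolding T_def by (simp add: sum.atLeast_Suc_lessThan)
  define Q where "Q m \<longleftrightarrow> (\<forall>l. m \<le> l \<longrightarrow> l < d \<longrightarrow> u l = 0)
     \<or> (m < d \<and> (\<forall>\<rho><m. D \<le> T \<rho> m \<and> T \<rho> m \<le> A \<rho> m))
     \<or> (m < d \<and> (\<forall>\<rho><m. - A \<rho> m \<le> T \<rho> m \<and> T \<rho> m \<le> - D))" for m
  have "Q (Suc i)"
  proof (rule inc_induct[of "Suc i" d])
    show "Suc i \<le> d" using id by simp
    show "Q d" unfolding Q_def by auto
  next
    fix n assume n: "Suc i \<le> n" "n < d" and IH: "Q (Suc n)"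
    have rown: "\<bar>of_int (u n) + T n (Suc n)\<bar> < 1 + D"
      using rows[of n] rowT[of n] n unfolding D_def by simp
    from IH consider (Z) "\<forall>l. Suc n \<le> l \<longrightarrow> l < d \<longrightarrow> u l = 0"
      | (P) "Suc n < d" "\<forall>\<rho><Suc n. D \<le> T \<rho> (Suc n) \<and> T \<rho> (Suc n) \<le> A \<rho> (Suc n)"
      | (N) "Suc n < d" "\<forall>\<rho><Suc n. - A \<rho> (Suc n) \<le> T \<rho> (Suc n) \<and> T \<rho> (Suc n) \<le> - D"
      unfolding Q_def by blast
    then show "Q n"
    proof cases
      case Z
      have T0: "\<And>\<rho>. T \<rho> (Suc n) = 0" unfolding T_def using Z by simp
      have "\<bar>of_int (u n)\<bar> < (2::real)" using rown T0 props(1) by simp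
      then have "\<bar>u n\<bar> < 2" by linarith
      then consider "u n = 0" | "u n = 1" | "u n = -1" by linarith
      then show ?thesis
      proof cases
        case 1 then show ?thesis unfolding Q_def using Z by (metis le_antisym not_less_eq_eq)
      next
        case 2
        have "\<forall>\<rho><n. D \<le> T \<rho> n \<and> T \<rho> n \<le> A \<rho> n"
          using Tstep[OF n(2)] T0 2 props(3) n by simp
        then show ?thesis unfolding Q_def using n by blast
      next
        case 3
        have "\<forall>\<rho><n. - A \<rho> n \<le> T \<rho> n \<and> T \<rho> n \<le> - D"
          using Tstep[OF n(2)] T0 3 props(3) n by simp
        then show ?thesis unfolding Q_def using n by blast
      qed
    next
      case P
      have b: "D \<le> T n (Suc n)" "T n (Suc n) \<le> 1 - D"
        using P(2) props(2)[of n "Suc n"] P(1) by auto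
      from int_pos_case[OF rown b] show ?thesis
      proof
        assume u: "u n = -1"
        have "\<forall>\<rho><n. - A \<rho> n \<le> T \<rho> n \<and> T \<rho> n \<le> - D"
        proof (intro allI impI)
          fix \<rho> assume r: "\<rho> < n"
          have "T \<rho> n = - A \<rho> n + T \<rho> (Suc n)" using Tstep[OF n(2)] u by simp
          moreover have "D \<le> T \<rho> (Suc n)" "T \<rho> (Suc n) \<le> A \<rho> (Suc n)" using P(2) r by auto
          moreover have "D \<le> A \<rho> n - A \<rho> (Suc n)" using props(4)[of \<rho> n "Suc n"] r P(1) by simp
          ultimately show "- A \<rho> n \<le> T \<rho> n \<and> T \<rho> n \<le> - D" using props(5) unfolding D_def by linarith
        qed
        then show ?thesis unfolding Q_def using n by blast
      next
        assume u: "u n = 0"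
        have "\<forall>\<rho><n. D \<le> T \<rho> n \<and> T \<rho> n \<le> A \<rho> n"
        proof (intro allI impI)
          fix \<rho> assume r: "\<rho> < n"
          have "T \<rho> n = T \<rho> (Suc n)" using Tstep[OF n(2)] u by simp
          moreover have "D \<le> T \<rho> (Suc n)" "T \<rho> (Suc n) \<le> A \<rho> (Suc n)" using P(2) r by auto
          moreover have "A \<rho> (Suc n) < A \<rho> n" using rf(3)[of \<rho> n "Suc n"] r P(1) by simp
          ultimately show "D \<le> T \<rho> n \<and> T \<rho> n \<le> A \<rho> n" by linarith
        qed
        then show ?thesis unfolding Q_def using n by blast
      qed
    next
      case N
      have b: "-(1 - D) \<le> T n (Suc n)" "T n (Suc n) \<le> - D"
        using N(2) props(2)[of n "Suc n"] N(1) by auto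
      from int_neg_case[OF rown b] show ?thesis
      proof
        assume u: "u n = 1"
        have "\<forall>\<rho><n. D \<le> T \<rho> n \<and> T \<rho> n \<le> A \<rho> n"
        proof (intro allI impI)
          fix \<rho> assume r: "\<rho> < n"
          have "T \<rho> n = A \<rho> n + T \<rho> (Suc n)" using Tstep[OF n(2)] u by simp
          moreover have "- A \<rho> (Suc n) \<le> T \<rho> (Suc n)" "T \<rho> (Suc n) \<le> - D" using N(2) r by auto
          moreover have "D \<le> A \<rho> n - A \<rho> (Suc n)" using props(4)[of \<rho> n "Suc n"] r N(1) by simp
          ultimately show "D \<le> T \<rho> n \<and> T \<rho> n \<le> A \<rho> n" using props(5) unfolding D_def by linarith
        qed
        then show ?thesis unfolding Q_def using n by blast
      next
        assume u: "u n = 0"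
        have "\<forall>\<rho><n. - A \<rho> n \<le> T \<rho> n \<and> T \<rho> n \<le> - D"
        proof (intro allI impI)
          fix \<rho> assume r: "\<rho> < n"
          have "T \<rho> n = T \<rho> (Suc n)" using Tstep[OF n(2)] u by simp
          moreover have "- A \<rho> (Suc n) \<le> T \<rho> (Suc n)" "T \<rho> (Suc n) \<le> - D" using N(2) r by auto
          moreover have "A \<rho> (Suc n) < A \<rho> n" using rf(3)[of \<rho> n "Suc n"] r N(1) by simp
          ultimately show "- A \<rho> n \<le> T \<rho> n \<and> T \<rho> n \<le> - D" by linarith
        qed
        then show ?thesis unfolding Q_def using n by blast
      qed
    qed
  qed
  have si: "(\<Sum>l<d. A i l * of_int (u l)) = of_int (u i) + T i (Suc i)" by (rule rowT[OF id])
  from \<open>Q (Suc i)\<close> nz consider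
      (P) "Suc i < d" "D \<le> T i (Suc i)" "T i (Suc i) \<le> A i (Suc i)"
    | (N) "Suc i < d" "- A i (Suc i) \<le> T i (Suc i)" "T i (Suc i) \<le> - D"
    unfolding Q_def by (metis Suc_leI lessI)
  then show ?thesis
  proof cases
    case P
    have "A i (Suc i) \<le> 1 - D" using props(2)[of i "Suc i"] P(1) by simp
    moreover have "u i \<ge> 0 \<or> u i \<le> -1" by linarith
    moreover have "u i \<ge> 0 \<Longrightarrow> of_int (u i) \<ge> (0::real)" by simp
    moreover have "u i \<le> -1 \<Longrightarrow> of_int (u i) \<le> (-1::real)" by simp
    ultimately show ?thesis unfolding si D_def[symmetric] using P by linarith
  next
    case N
    have "A i (Suc i) \<le> 1 - D" using props(2)[of i "Suc i"] N(1) by simp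
    moreover have "u i \<ge> 1 \<or> u i \<le> 0" by linarith
    moreover have "u i \<ge> 1 \<Longrightarrow> of_int (u i) \<ge> (1::real)" by simp
    moreover have "u i \<le> 0 \<Longrightarrow> of_int (u i) \<le> (0::real)" by simp
    ultimately show ?thesis unfolding si D_def[symmetric] using N by linarith
  qed
qed

definition Rset :: "nat \<Rightarrow> (nat \<Rightarrow> nat \<Rightarrow> real) \<Rightarrow> (nat \<Rightarrow> real) \<Rightarrow> nat \<Rightarrow> (nat \<Rightarrow> int) set" where
 "Rset d A p i = {t. (\<forall>j. (j < i \<or> d \<le> j) \<longrightarrow> t j = 0) \<and>
    (\<exists>x. (\<forall>j<d. \<bar>x j - p j\<bar> \<le> reclusive_distance d A / 2) \<and>
      (\<forall>j. i \<le> j \<longrightarrow> j < d \<longrightarrow> (\<Sum>l<d. A j l * of_int (t l)) \<le> x j \<and> x j < (\<Sum>l<d. A j l * of_int (t l)) + 1))}"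

lemma Rstep:
  assumes R: "reclusive d A" and i: "i < d"
  shows "\<exists>g e. Rset d A p i \<subseteq> g ` Rset d A p (Suc i) \<union> {e}"
proof -
  define D where "D = reclusive_distance d A"
  define c where "c = p i - D/2"
  define s where "s t = (\<Sum>l<d. A i l * of_int (t l))" for t :: "nat \<Rightarrow> int"
  define g where "g t = t(i := \<lfloor>c - s t\<rfloor>)" for t
  define E where "E = {r \<in> Rset d A p i. r i = \<lfloor>c - s (r(i:=0))\<rfloor> + 1}"
  note props = dist_props[OF R, folded D_def]
  note rf = rec_facts[OF R]
  have rowi: "(\<Sum>l<d. A i l * of_int (r l)) = of_int (r i) + s (r(i:=0))" for r :: "nat \<Rightarrow> int"
  proof -
    have "(\<Sum>l<d. A i l * of_int (r l)) = of_int (r i) + (\<Sum>l\<in>{Suc i..<d}. A i l * of_int (r l))"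
      by (rule row_split[OF R i])
    moreover have "s (r(i:=0)) = of_int ((r(i:=0)) i) + (\<Sum>l\<in>{Suc i..<d}. A i l * of_int ((r(i:=0)) l))"
      unfolding s_def by (rule row_split[OF R i])
    moreover have "(\<Sum>l\<in>{Suc i..<d}. A i l * of_int ((r(i:=0)) l)) = (\<Sum>l\<in>{Suc i..<d}. A i l * of_int (r l))"
      by (rule sum.cong) auto
    ultimately show ?thesis by simp
  qed
  have rowj: "(\<Sum>l<d. A j l * of_int ((r(i:=0)) l)) = (\<Sum>l<d. A j l * of_int (r l))"
    if "i < j" "j < d" for r :: "nat \<Rightarrow> int" and j
    by (rule sum.cong) (use rf(1)[of j i] that in auto)
  have mem: "r(i:=0) \<in> Rset d A p (Suc i) \<and> (r = g (r(i:=0)) \<or> r \<in> E)" if rR: "r \<in> Rset d A p i" for r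
  proof -
    from rR obtain x where z: "\<forall>j. (j < i \<or> d \<le> j) \<longrightarrow> r j = 0"
      and xb: "\<forall>j<d. \<bar>x j - p j\<bar> \<le> D / 2"
      and xr: "\<forall>j. i \<le> j \<longrightarrow> j < d \<longrightarrow> (\<Sum>l<d. A j l * of_int (r l)) \<le> x j \<and> x j < (\<Sum>l<d. A j l * of_int (r l)) + 1"
      unfolding Rset_def D_def by blast
    have "r(i:=0) \<in> Rset d A p (Suc i)"
      unfolding Rset_def D_def[symmetric]
    proof (intro CollectI conjI exI)
      show "\<forall>j. (j < Suc i \<or> d \<le> j) \<longrightarrow> (r(i := 0)) j = 0" using z by (simp add: less_Suc_eq)
      show "\<forall>j<d. \<bar>x j - p j\<bar> \<le> D / 2" by fact
      show "\<forall>j. Suc i \<le> j \<longrightarrow> j < d \<longrightarrow> (\<Sum>l<d. A j l * of_int ((r(i:=0)) l)) \<le> x j \<and> x j < (\<Sum>l<d. A j l * of_int ((r(i:=0)) l)) + 1"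
        using xr rowj by auto
    qed
    moreover have "r = g (r(i:=0)) \<or> r \<in> E"
    proof -
      define \<sigma> where "\<sigma> = s (r(i:=0))"
      have b1: "of_int (r i) + \<sigma> \<le> x i" "x i < of_int (r i) + \<sigma> + 1"
        using xr[rule_format, of i] i rowi[of r] unfolding \<sigma>_def by auto
      have "\<bar>x i - p i\<bar> \<le> D / 2" using xb i by blast
      then have b2: "c \<le> x i" "x i \<le> c + D" unfolding c_def by (simp_all add: abs_le_iff, linarith+)
      have f1: "of_int \<lfloor>c - \<sigma>\<rfloor> \<le> c - \<sigma>" "c - \<sigma> < of_int \<lfloor>c - \<sigma>\<rfloor> + 1" by linarith+
      have "of_int (r i) > of_int \<lfloor>c - \<sigma>\<rfloor> - (1::real)" using b1 b2 f1 by linarith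
      then have lo: "r i \<ge> \<lfloor>c - \<sigma>\<rfloor>" by linarith
      have "of_int (r i) < of_int \<lfloor>c - \<sigma>\<rfloor> + (2::real)" using b1 b2 f1 props(1) by linarith
      then have hi: "r i \<le> \<lfloor>c - \<sigma>\<rfloor> + 1" by linarith
      from lo hi have "r i = \<lfloor>c - \<sigma>\<rfloor> \<or> r i = \<lfloor>c - \<sigma>\<rfloor> + 1" by linarith
      then show ?thesis
      proof
        assume "r i = \<lfloor>c - \<sigma>\<rfloor>"
        then have "g (r(i:=0)) = r" unfolding g_def \<sigma>_def by (metis fun_upd_triv fun_upd_upd)
        then show ?thesis by simp
      next
        assume "r i = \<lfloor>c - \<sigma>\<rfloor> + 1"
        then show ?thesis unfolding E_def \<sigma>_def using rR by simp
      qed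
    qed
    ultimately show ?thesis by blast
  qed
  have Eb: "c < of_int (r i) + s (r(i:=0)) \<and> of_int (r i) + s (r(i:=0)) \<le> c + D" if rE: "r \<in> E" for r
  proof -
    from rE have rR: "r \<in> Rset d A p i" and ri: "r i = \<lfloor>c - s (r(i:=0))\<rfloor> + 1" unfolding E_def by auto
    from rR obtain x where xb: "\<forall>j<d. \<bar>x j - p j\<bar> \<le> D / 2"
      and xr: "\<forall>j. i \<le> j \<longrightarrow> j < d \<longrightarrow> (\<Sum>l<d. A j l * of_int (r l)) \<le> x j \<and> x j < (\<Sum>l<d. A j l * of_int (r l)) + 1"
      unfolding Rset_def D_def by blast
    have b1: "of_int (r i) + s (r(i:=0)) \<le> x i"
      using xr[rule_format, of i] i rowi[of r] by auto
    have "\<bar>x i - p i\<bar> \<le> D / 2" using xb i by blast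
    then have b2: "x i \<le> c + D" unfolding c_def by (simp_all add: abs_le_iff, linarith+)
    have "c - s (r(i:=0)) < of_int \<lfloor>c - s (r(i:=0))\<rfloor> + 1" by linarith
    then show ?thesis using ri b1 b2 by simp linarith
  qed
  have uniq: "r = r'" if rE: "r \<in> E" and rE': "r' \<in> E" for r r'
  proof (rule ccontr)
    assume ne: "r \<noteq> r'"
    from rE have rR: "r \<in> Rset d A p i" unfolding E_def by auto
    from rE' have rR': "r' \<in> Rset d A p i" unfolding E_def by auto
    from rR obtain x where z: "\<forall>j. (j < i \<or> d \<le> j) \<longrightarrow> r j = 0"
      and xb: "\<forall>j<d. \<bar>x j - p j\<bar> \<le> D / 2"
      and xr: "\<forall>j. i \<le> j \<longrightarrow> j < d \<longrightarrow> (\<Sum>l<d. A j l * of_int (r l)) \<le> x j \<and> x j < (\<Sum>l<d. A j l * of_int (r l)) + 1"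
      unfolding Rset_def D_def by blast
    from rR' obtain y where z': "\<forall>j. (j < i \<or> d \<le> j) \<longrightarrow> r' j = 0"
      and yb: "\<forall>j<d. \<bar>y j - p j\<bar> \<le> D / 2"
      and yr: "\<forall>j. i \<le> j \<longrightarrow> j < d \<longrightarrow> (\<Sum>l<d. A j l * of_int (r' l)) \<le> y j \<and> y j < (\<Sum>l<d. A j l * of_int (r' l)) + 1"
      unfolding Rset_def D_def by blast
    define u where "u l = r l - r' l" for l
    have usum: "(\<Sum>l<d. A j l * of_int (u l)) = (\<Sum>l<d. A j l * of_int (r l)) - (\<Sum>l<d. A j l * of_int (r' l))" for j
      unfolding u_def by (simp add: sum_subtractf[symmetric] algebra_simps)
    show False
    proof (cases "\<exists>j. i < j \<and> j < d \<and> u j \<noteq> 0")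
      case True
      have rows: "\<bar>\<Sum>l<d. A j l * of_int (u l)\<bar> < 1 + reclusive_distance d A" if "i < j" "j < d" for j
      proof -
        have "\<bar>x j - y j\<bar> \<le> D" using xb yb that by (smt (verit) field_sum_of_halves)
        moreover have "(\<Sum>l<d. A j l * of_int (r l)) \<le> x j \<and> x j < (\<Sum>l<d. A j l * of_int (r l)) + 1"
          using xr that by simp
        moreover have "(\<Sum>l<d. A j l * of_int (r' l)) \<le> y j \<and> y j < (\<Sum>l<d. A j l * of_int (r' l)) + 1"
          using yr that by simp
        ultimately show ?thesis unfolding usum D_def[symmetric] abs_less_iff abs_le_iff by linarith
      qed
      have "D \<le> \<bar>\<Sum>l<d. A i l * of_int (u l)\<bar>" unfolding D_def by (rule key[OF R i True rows])
      moreover have "\<bar>\<Sum>l<d. A i l * of_int (u l)\<bar> < D"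
        unfolding usum rowi using Eb[OF rE] Eb[OF rE'] by (auto simp: abs_less_iff)
      ultimately show False by simp
    next
      case False
      have tt: "r(i:=0) = r'(i:=0)"
      proof
        fix l show "(r(i:=0)) l = (r'(i:=0)) l"
          using z z' False unfolding u_def by (cases "l = i"; cases "l < i"; cases "d \<le> l"; force)
      qed
      have "r i = r' i" using rE rE' tt unfolding E_def by simp
      then have "r = r'" using tt by (metis fun_upd_triv fun_upd_upd)
      with ne show False by simp
    qed
  qed
  obtain e where Ee: "E \<subseteq> {e}"
  proof (cases "E = {}")
    case True then show ?thesis using that by blast
  next
    case False then obtain e where "e \<in> E" by blast
    then show ?thesis using that uniq by blast
  qed
  have "Rset d A p i \<subseteq> g ` Rset d A p (Suc i) \<union> {e}"
  proof
    fix r assume "r \<in> Rset d A p i"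
    from mem[OF this] show "r \<in> g ` Rset d A p (Suc i) \<union> {e}" using Ee by blast
  qed
  then show ?thesis by blast
qed

lemma Rcount:
  assumes R: "reclusive d A" and id: "i \<le> d"
  shows "finite (Rset d A p i) \<and> card (Rset d A p i) \<le> d - i + 1"
  using id
proof (induction rule: inc_induct)
  case base
  have "Rset d A p d \<subseteq> {\<lambda>_. 0}" unfolding Rset_def by (auto simp: not_le[symmetric])
  then have "finite (Rset d A p d)" "card (Rset d A p d) \<le> card {\<lambda>_::nat. 0::int}"
    using finite_subset card_mono by blast+
  then show ?case by simp
next
  case (step n)
  obtain g e where sub: "Rset d A p n \<subseteq> g ` Rset d A p (Suc n) \<union> {e}" using Rstep[OF R step(2)] by blast
  have fin: "finite (g ` Rset d A p (Suc n) \<union> {e})" using step(3) by simp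
  have "card (Rset d A p n) \<le> card (g ` Rset d A p (Suc n) \<union> {e})" by (rule card_mono[OF fin sub])
  also have "\<dots> \<le> card (g ` Rset d A p (Suc n)) + card {e}" by (rule card_Un_le)
  also have "\<dots> \<le> card (Rset d A p (Suc n)) + 1" using card_image_le[OF conjunct1[OF step(3)]] by simp
  finally show ?case using step(2,3) finite_subset[OF sub fin] by linarith
qed

theorem mainTheorem10:
  fixes d :: nat and A :: "nat \<Rightarrow> nat \<Rightarrow> real" and p :: "nat \<Rightarrow> real"
  assumes "reclusive d A"
    and "p \<in> Rd d"
  shows "finite (neighbourhood d A (reclusive_distance d A / 2) p) \<and>
         card (neighbourhood d A (reclusive_distance d A / 2) p) \<le> d + 1"
proof -
  let ?N = "neighbourhood d A (reclusive_distance d A / 2) p"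
  have sub: "?N \<subseteq> (\<lambda>t. unit_cell d (mat_vec d A t)) ` Rset d A p 0"
  proof
    fix X assume "X \<in> ?N"
    then obtain v x where X: "X = unit_cell d (mat_vec d A v)" and xX: "x \<in> X"
      and xB: "x \<in> max_cball d p (reclusive_distance d A / 2)"
      unfolding neighbourhood_def reclusive_partition_def lattice_def by blast
    define t where "t j = (if j < d then v j else 0)" for j
    have mv: "mat_vec d A t = mat_vec d A v" unfolding mat_vec_def t_def by (rule ext) simp
    have "t \<in> Rset d A p 0"
      unfolding Rset_def
    proof (intro CollectI conjI exI)
      show "\<forall>j. (j < 0 \<or> d \<le> j) \<longrightarrow> t j = 0" unfolding t_def by simp
      show "\<forall>j<d. \<bar>x j - p j\<bar> \<le> reclusive_distance d A / 2" using xB unfolding max_cball_def by blast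
      show "\<forall>j. 0 \<le> j \<longrightarrow> j < d \<longrightarrow> (\<Sum>l<d. A j l * of_int (t l)) \<le> x j \<and> x j < (\<Sum>l<d. A j l * of_int (t l)) + 1"
        using xX unfolding X mv[symmetric] unit_cell_def by (simp add: mat_vec_def)
    qed
    then show "X \<in> (\<lambda>t. unit_cell d (mat_vec d A t)) ` Rset d A p 0" using X mv by (metis image_eqI)
  qed
  have c: "finite (Rset d A p 0) \<and> card (Rset d A p 0) \<le> d + 1" using Rcount[OF assms(1), of 0 p] by simp
  then have fin: "finite ?N" using sub finite_subset by blast
  have "card ?N \<le> card ((\<lambda>t. unit_cell d (mat_vec d A t)) ` Rset d A p 0)"
    using sub c by (intro card_mono) auto
  also have "\<dots> \<le> card (Rset d A p 0)" by (rule card_image_le) (use c in blast)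
  finally show ?thesis using fin c by linarith
qed

end
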